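(* If $X$ is a metric space with weak hyperbolic property C, then $X$ has Yu's property A.
   Context: For $R>0$, a family $\mathcal U$ of nonempty subsets of a metric space is $R$-disjoint if $d(A,B)>R$ for all distinct $A,B\in\mathcal U$, where $d(A,B)=\inf\{d(a,b):a\in A,b\in B\}$. $B_r(x)$ denotes the open ball of radius $r$ about $x$. A subset $U\subset X$ is $(N,R)$-large scale doubling if for every $x\in X$ and every $r\ge R$, $B_{2r}(x)\cap U$ can be covered by $N$ balls of radius $r$ with centers in $X$. A family $\mathcal U$ of subsets of $X$ is weakly uniformly large scale doubling if there is $(N,R)$ such that each $U\in\mathcal U$ is $(N,R)$-large scale doubling. $X$ has weak hyperbolic property C if for every sequence $R_0,R_1,\dots$ of positive reals there exist $n\ge0$ and $R_i$-disjoint families $\mathcal U_i$ ($i=0,\dots,n$) such that $\bigcup_{i=0}^n\mathcal U_i$ is a weakly uniformly large scale doubling cover of $X$. Property A is Yu's coarse amenability property: for a (discrete) metric space $X$, for every $R>0$ and $\varepsilon>0$ there exist $S>0$ and a family $\{A_x\}_{x\in X}$ of finite nonempty subsets of $X\times\mathbb N$ such that $(x,1)\in A_x$ and $A_x\subset B_S(x)\times\mathbb N$ for all $x$, and $|A_x\triangle A_y|/|A_x\cap A_y|<\varepsilon$ whenever $d(x,y)<R$. *)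

theory Defs
  imports "HOL-Analysis.Analysis"
begin

text \<open>The metric space X is the whole carrier (UNIV) of a type of class metric_space.\<close>

definition set_dist :: "'a::metric_space set \<Rightarrow> 'a set \<Rightarrow> real" where
  "set_dist A B = Inf {dist a b | a b. a \<in> A \<and> b \<in> B}"

definition R_disjoint :: "real \<Rightarrow> 'a::metric_space set set \<Rightarrow> bool" where
  "R_disjoint R \<U> \<longleftrightarrow> (\<forall>A\<in>\<U>. A \<noteq> {}) \<and>
     (\<forall>A\<in>\<U>. \<forall>B\<in>\<U>. A \<noteq> B \<longrightarrow> set_dist A B > R)"

definition ls_doubling :: "nat \<Rightarrow> real \<Rightarrow> 'a::metric_space set \<Rightarrow> bool" where
  "ls_doubling N R U \<longleftrightarrow>
     (\<forall>x r. r \<ge> R \<longrightarrow>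
        (\<exists>C. finite C \<and> card C \<le> N \<and> ball x (2 * r) \<inter> U \<subseteq> (\<Union>c\<in>C. ball c r)))"

definition weakly_unif_ls_doubling :: "'a::metric_space set set \<Rightarrow> bool" where
  "weakly_unif_ls_doubling \<U> \<longleftrightarrow> (\<exists>N R. \<forall>U\<in>\<U>. ls_doubling N R U)"

definition weak_hyperbolic_C :: "'a::metric_space itself \<Rightarrow> bool" where
  "weak_hyperbolic_C _ \<longleftrightarrow>
     (\<forall>R :: nat \<Rightarrow> real. (\<forall>i. R i > 0) \<longrightarrow>
        (\<exists>n. \<exists>\<U> :: nat \<Rightarrow> 'a set set.
           (\<forall>i\<le>n. R_disjoint (R i) (\<U> i)) \<and>
           (\<Union>(\<Union>i\<le>n. \<U> i)) = UNIV \<and>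
           weakly_unif_ls_doubling (\<Union>i\<le>n. \<U> i)))"

definition property_A :: "'a::metric_space itself \<Rightarrow> bool" where
  "property_A _ \<longleftrightarrow>
     (\<forall>R>0. \<forall>\<epsilon>>0. \<exists>S>0. \<exists>A :: 'a \<Rightarrow> ('a \<times> nat) set.
        (\<forall>x. finite (A x) \<and> A x \<noteq> {} \<and> (x, 1) \<in> A x \<and> A x \<subseteq> ball x S \<times> UNIV) \<and>
        (\<forall>x y. dist x y < R \<longrightarrow>
           real (card ((A x - A y) \<union> (A y - A x))) < \<epsilon> * real (card (A x \<inter> A y))))"

end

theory Submission
  imports Defs
begin


definition fsupp :: "('a \<Rightarrow> real) \<Rightarrow> 'a set" where
  "fsupp f = {p. f p \<noteq> 0}"

lemma sum_fsupp_eq: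
  assumes "finite P" "fsupp f \<subseteq> P"
  shows "sum f (fsupp f) = sum f P"
  using assms by (intro sum.mono_neutral_left) (auto simp: fsupp_def)

definition realA :: "'a::metric_space itself \<Rightarrow> bool" where
  "realA _ \<longleftrightarrow> (\<forall>R>0. \<forall>\<epsilon>>0. \<exists>S>0. \<exists>M::nat. \<exists>g::'a \<Rightarrow> 'a \<Rightarrow> real.
     (\<forall>x. (\<forall>p. g x p \<ge> 0) \<and> finite (fsupp (g x)) \<and> card (fsupp (g x)) \<le> M \<and>
          fsupp (g x) \<subseteq> ball x S \<and> sum (g x) (fsupp (g x)) = 1) \<and>
     (\<forall>x y. dist x y < R \<longrightarrow> (\<Sum>p\<in>fsupp (g x) \<union> fsupp (g y). \<bar>g x p - g y p\<bar>) \<le> \<epsilon>))"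

lemma card_Sigma_sum:
  assumes "finite P" "\<And>p. finite (B p)"
  shows "card (Sigma P B) = (\<Sum>p\<in>P. card (B p))"
  using assms by (simp add: card_SigmaI)

lemma card_insert_le1: "card (insert a A) \<le> Suc (card A)"
  by (cases "finite A") (auto simp: card_insert_if)

lemma realA_imp_A:
  assumes "realA TYPE('a::metric_space)"
  shows "property_A TYPE('a)"
  unfolding property_A_def
proof (intro allI impI)
  fix R \<epsilon> :: real assume R: "R > 0" and e: "\<epsilon> > 0"
  define e' where "e' = min \<epsilon> 1"
  have e'pos: "e' > 0" and e'1: "e' \<le> 1" and e'e: "e' \<le> \<epsilon>" using e by (auto simp: e'_def)
  have h4: "e'/4 > 0" using e'pos by simp
  from assms[unfolded realA_def, rule_format, OF R h4]
  obtain S M and g :: "'a \<Rightarrow> 'a \<Rightarrow> real" where S: "S > 0" and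
    g0: "\<forall>x. (\<forall>p. g x p \<ge> 0) \<and> finite (fsupp (g x)) \<and> card (fsupp (g x)) \<le> M \<and>
          fsupp (g x) \<subseteq> ball x S \<and> sum (g x) (fsupp (g x)) = 1"
    and gd0: "\<forall>x y. dist x y < R \<longrightarrow> (\<Sum>p\<in>fsupp (g x) \<union> fsupp (g y). \<bar>g x p - g y p\<bar>) \<le> e'/4"
    by blast
  have g: "(\<forall>p. g x p \<ge> 0) \<and> finite (fsupp (g x)) \<and> card (fsupp (g x)) \<le> M \<and>
          fsupp (g x) \<subseteq> ball x S \<and> sum (g x) (fsupp (g x)) = 1" for x using g0 by blast
  have gd: "(\<Sum>p\<in>fsupp (g x) \<union> fsupp (g y). \<bar>g x p - g y p\<bar>) \<le> e'/4" if "dist x y < R" for x y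
    using gd0 that by blast
  define Q :: real where "Q = (4 + 12 * real M) / e' + 1"
  have Qpos: "Q > 0" using e'pos by (simp add: Q_def add_pos_nonneg)
  have Qbig: "e' * Q / 2 > 2 + 6 * real M"
  proof -
    have "e' * Q = 4 + 12 * real M + e'" using e'pos by (simp add: Q_def field_simps)
    then show ?thesis using e'pos by linarith
  qed
  define f :: "'a \<Rightarrow> 'a \<Rightarrow> nat" where "f x p = nat \<lfloor>Q * g x p\<rfloor>" for x p
  define A :: "'a \<Rightarrow> ('a \<times> nat) set" where
    "A x = insert (x,1) (SIGMA p:fsupp (g x). {2..<f x p + 2})" for x
  have f0: "f x p = 0" if "p \<notin> fsupp (g x)" for x p
    using that by (simp add: f_def fsupp_def)
  have Aeq: "A x = insert (x,1) (SIGMA p:P. {2..<f x p + 2})" if "fsupp (g x) \<subseteq> P" for x P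
    using that f0 unfolding A_def by auto
  have fle: "real (f x p) \<le> Q * g x p" for x p
    using g[of x] Qpos by (simp add: f_def)
  have fge: "real (f x p) \<ge> Q * g x p - 1" for x p
    using g[of x] Qpos by (simp add: f_def)
  have part1: "\<forall>x. finite (A x) \<and> A x \<noteq> {} \<and> (x, 1) \<in> A x \<and> A x \<subseteq> ball x S \<times> UNIV"
  proof
    fix x
    show "finite (A x) \<and> A x \<noteq> {} \<and> (x, 1) \<in> A x \<and> A x \<subseteq> ball x S \<times> UNIV"
      using g[of x] S by (auto simp: A_def)
  qed
  have part2: "\<forall>x y. dist x y < R \<longrightarrow>
           real (card (A x - A y \<union> (A y - A x))) < \<epsilon> * real (card (A x \<inter> A y))"
  proof (intro allI impI)
    fix x y :: 'a assume dxy: "dist x y < R"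
    define P where "P = fsupp (g x) \<union> fsupp (g y)"
    have Pfin: "finite P" using g[of x] g[of y] by (simp add: P_def)
    have cardP: "card P \<le> 2 * M"
      using card_Un_le[of "fsupp (g x)" "fsupp (g y)"] g[of x] g[of y] unfolding P_def by linarith
    have Ax: "A x = insert (x,1) (SIGMA p:P. {2..<f x p + 2})" by (rule Aeq) (auto simp: P_def)
    have Ay: "A y = insert (y,1) (SIGMA p:P. {2..<f y p + 2})" by (rule Aeq) (auto simp: P_def)
    have inter: "(SIGMA p:P. {2..<min (f x p) (f y p) + 2}) \<subseteq> A x \<inter> A y"
      unfolding Ax Ay by auto
    have c1: "(\<Sum>p\<in>P. min (f x p) (f y p)) \<le> card (A x \<inter> A y)"
    proof -
      have "card (SIGMA p:P. {2..<min (f x p) (f y p) + 2}) \<le> card (A x \<inter> A y)"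
        by (rule card_mono) (use Ax Pfin inter in auto)
      then show ?thesis using Pfin by (simp add: card_SigmaI)
    qed
    have d1: "A x - A y \<subseteq> insert (x,1) (SIGMA p:P. {2..<f x p + 2} - {2..<f y p + 2})"
      unfolding Ax Ay by auto
    have d2: "A y - A x \<subseteq> insert (y,1) (SIGMA p:P. {2..<f y p + 2} - {2..<f x p + 2})"
      unfolding Ax Ay by auto
    have cd: "card ({2..<a + 2} - {2..<b + 2}) = a - b" for a b :: nat
    proof -
      have "{2..<a + 2} - {2..<b + 2} = {b+2..<a+2}" by auto
      then show ?thesis by simp
    qed
    have cx: "card (A x - A y) \<le> 1 + (\<Sum>p\<in>P. f x p - f y p)"
    proof -
      have "card (A x - A y) \<le> card (insert (x,1) (SIGMA p:P. {2..<f x p + 2} - {2..<f y p + 2}))"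
        by (rule card_mono) (use d1 Pfin in auto)
      also have "\<dots> \<le> 1 + card (SIGMA p:P. {2..<f x p + 2} - {2..<f y p + 2})"
        using card_insert_le1 by simp
      also have "\<dots> = 1 + (\<Sum>p\<in>P. f x p - f y p)" using Pfin by (simp add: card_SigmaI cd)
      finally show ?thesis .
    qed
    have cy: "card (A y - A x) \<le> 1 + (\<Sum>p\<in>P. f y p - f x p)"
    proof -
      have "card (A y - A x) \<le> card (insert (y,1) (SIGMA p:P. {2..<f y p + 2} - {2..<f x p + 2}))"
        by (rule card_mono) (use d2 Pfin in auto)
      also have "\<dots> \<le> 1 + card (SIGMA p:P. {2..<f y p + 2} - {2..<f x p + 2})"
        using card_insert_le1 by simp
      also have "\<dots> = 1 + (\<Sum>p\<in>P. f y p - f x p)" using Pfin by (simp add: card_SigmaI cd)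
      finally show ?thesis .
    qed
    have cdiff: "card (A x - A y \<union> (A y - A x)) \<le> 2 + (\<Sum>p\<in>P. (f x p - f y p) + (f y p - f x p))"
      using card_Un_le[of "A x - A y" "A y - A x"] cx cy by (simp add: sum.distrib)
    have pw: "real ((f x p - f y p) + (f y p - f x p)) \<le> Q * \<bar>g x p - g y p\<bar> + 1" for p
    proof -
      have "real ((f x p - f y p) + (f y p - f x p)) = \<bar>real (f x p) - real (f y p)\<bar>" by linarith
      also have "\<dots> \<le> Q * \<bar>g x p - g y p\<bar> + 1"
      proof -
        have q: "Q * \<bar>g x p - g y p\<bar> = \<bar>Q * g x p - Q * g y p\<bar>"
          using Qpos by (simp add: right_diff_distrib[symmetric] abs_mult)
        show ?thesis unfolding q using fle[of x p] fge[of x p] fle[of y p] fge[of y p] by arith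
      qed
      finally show ?thesis .
    qed
    have gdP: "(\<Sum>p\<in>P. \<bar>g x p - g y p\<bar>) \<le> e'/4" using gd[OF dxy] by (simp add: P_def)
    have D: "real (\<Sum>p\<in>P. (f x p - f y p) + (f y p - f x p)) \<le> Q * (e'/4) + 2 * real M"
    proof -
      have "real (\<Sum>p\<in>P. (f x p - f y p) + (f y p - f x p)) \<le> (\<Sum>p\<in>P. Q * \<bar>g x p - g y p\<bar> + 1)"
        unfolding of_nat_sum by (rule sum_mono) (rule pw)
      also have "\<dots> = Q * (\<Sum>p\<in>P. \<bar>g x p - g y p\<bar>) + card P"
        by (simp add: sum.distrib sum_distrib_left)
      also have "\<dots> \<le> Q * (e'/4) + 2 * real M"
      proof -
        have "Q * (\<Sum>p\<in>P. \<bar>g x p - g y p\<bar>) \<le> Q * (e'/4)" using gdP Qpos by (intro mult_left_mono) auto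
        moreover have "real (card P) \<le> 2 * real M" using cardP by (metis of_nat_le_iff of_nat_mult of_nat_numeral)
        ultimately show ?thesis by linarith
      qed
      finally show ?thesis .
    qed
    have gsum: "(\<Sum>p\<in>P. g x p) = 1"
      using g[of x] sum_fsupp_eq[OF Pfin, of "g x"] by (simp add: P_def)
    have mn: "real (min (f x p) (f y p)) \<ge> real (f x p) - real ((f x p - f y p) + (f y p - f x p))" for p
      by linarith
    have I: "real (\<Sum>p\<in>P. min (f x p) (f y p)) \<ge> Q * (1 - e'/4) - 4 * real M"
    proof -
      have "real (\<Sum>p\<in>P. min (f x p) (f y p)) \<ge> (\<Sum>p\<in>P. real (f x p) - real ((f x p - f y p) + (f y p - f x p)))"
        unfolding of_nat_sum by (rule sum_mono) (rule mn)
      moreover have "(\<Sum>p\<in>P. real (f x p)) \<ge> (\<Sum>p\<in>P. Q * g x p - 1)"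
        by (rule sum_mono) (rule fge)
      moreover have "(\<Sum>p\<in>P. Q * g x p - 1) = Q - card P"
        using gsum by (simp add: sum_subtractf sum_distrib_left[symmetric])
      moreover have "(\<Sum>p\<in>P. real (f x p) - real ((f x p - f y p) + (f y p - f x p))) =
          (\<Sum>p\<in>P. real (f x p)) - real (\<Sum>p\<in>P. (f x p - f y p) + (f y p - f x p))"
        by (simp add: sum_subtractf)
      moreover have "real (card P) \<le> 2 * real M" using cardP by (metis of_nat_le_iff of_nat_mult of_nat_numeral)
      moreover have "Q * (1 - e'/4) = Q - Q * (e'/4)" by (simp add: algebra_simps)
      ultimately show ?thesis using D by linarith
    qed
    have "real (card (A x - A y \<union> (A y - A x))) \<le> 2 + Q * (e'/4) + 2 * real M"
    proof -
      have "real (card (A x - A y \<union> (A y - A x))) \<le> real (2 + (\<Sum>p\<in>P. (f x p - f y p) + (f y p - f x p)))"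
        using cdiff by (rule of_nat_mono)
      then have "real (card (A x - A y \<union> (A y - A x))) \<le> 2 + real (\<Sum>p\<in>P. (f x p - f y p) + (f y p - f x p))"
        by (simp only: of_nat_add)
      then show ?thesis using D by linarith
    qed
    also have "\<dots> < e' * (Q * (1 - e'/4) - 4 * real M)"
    proof -
      have "e' * (Q * (1 - e'/4) - 4 * real M) \<ge> e' * (Q * (3/4)) - 4 * real M"
      proof -
        have "e' * (Q * (1 - e'/4)) \<ge> e' * (Q * (3/4))"
          using e'pos e'1 Qpos by (intro mult_left_mono) auto
        moreover have "e' * (4 * real M) \<le> 4 * real M" using e'1 e'pos by (simp add: mult_left_le_one_le)
        moreover have "e' * (Q * (1 - e'/4) - 4 * real M) = e' * (Q * (1 - e'/4)) - e' * (4 * real M)"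
          by (simp only: right_diff_distrib)
        ultimately show ?thesis by linarith
      qed
      moreover have "Q * (e'/4) + e' * Q / 2 = e' * (Q * (3/4))" by (simp add: field_simps)
      ultimately show ?thesis using Qbig by linarith
    qed
    also have "\<dots> \<le> \<epsilon> * real (card (A x \<inter> A y))"
    proof -
      have "Q * (1 - e'/4) - 4 * real M \<le> real (card (A x \<inter> A y))"
        using I of_nat_mono[OF c1, where 'a=real] by linarith
      moreover have "Q * (1 - e'/4) - 4 * real M \<ge> 0"
      proof -
        have "Q * (1 - e'/4) \<ge> Q * (3/4)" using e'1 Qpos by (intro mult_left_mono) auto
        moreover have "e' * (Q * (3/4)) \<le> Q * (3/4)" using e'1 Qpos by (simp add: mult_left_le_one_le)
        moreover have "Q * (3/4) \<ge> e' * Q / 2 " 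
        proof -
          have "e' * Q \<le> Q" using e'1 Qpos by (simp add: mult_left_le_one_le)
          then show ?thesis using Qpos by linarith
        qed
        ultimately show ?thesis using Qbig by linarith
      qed
      ultimately show ?thesis using e'e e'pos
        by (meson dual_order.trans mult_mono of_nat_0_le_iff less_imp_le)
    qed
    finally show "real (card (A x - A y \<union> (A y - A x))) < \<epsilon> * real (card (A x \<inter> A y))" .
  qed
  show "\<exists>S>0. \<exists>A :: 'a \<Rightarrow> ('a \<times> nat) set. (\<forall>x. finite (A x) \<and> A x \<noteq> {} \<and> (x, 1) \<in> A x \<and> A x \<subseteq> ball x S \<times> UNIV) \<and>
        (\<forall>x y. dist x y < R \<longrightarrow>
           real (card (A x - A y \<union> (A y - A x))) < \<epsilon> * real (card (A x \<inter> A y)))"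
    by (rule exI[of _ S], rule conjI[OF S], rule exI[of _ A], rule conjI[OF part1 part2])
qed



lemma normalize_l1:
  fixes f g :: "'a \<Rightarrow> real"
  assumes P: "finite P" and f0: "\<forall>p. f p \<ge> 0" and g0: "\<forall>p. g p \<ge> 0" and A: "sum f P > 0"
  shows "(\<Sum>p\<in>P. \<bar>f p / sum f P - g p / sum g P\<bar>) \<le> 2 * (\<Sum>p\<in>P. \<bar>f p - g p\<bar>) / sum f P"
proof -
  define a where "a = sum f P"
  define b where "b = sum g P"
  define d where "d = (\<Sum>p\<in>P. \<bar>f p - g p\<bar>)"
  have apos: "a > 0" using A by (simp add: a_def)
  have bnn: "b \<ge> 0" using g0 by (simp add: b_def sum_nonneg)
  have bad: "\<bar>b - a\<bar> \<le> d"
  proof -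
    have "b - a = (\<Sum>p\<in>P. g p - f p)" by (simp add: a_def b_def sum_subtractf)
    then have "\<bar>b - a\<bar> \<le> (\<Sum>p\<in>P. \<bar>g p - f p\<bar>)" by (simp add: sum_abs)
    also have "\<dots> = d" by (simp add: d_def abs_minus_commute)
    finally show ?thesis .
  qed
  show ?thesis
  proof (cases "b = 0")
    case True
    have "\<forall>p\<in>P. g p = 0" using True P g0 by (simp add: b_def sum_nonneg_eq_0_iff)
    then have "(\<Sum>p\<in>P. \<bar>f p / a - g p / b\<bar>) = (\<Sum>p\<in>P. f p / a)"
      using True f0 apos by (intro sum.cong) (auto simp: abs_of_nonneg)
    also have "\<dots> = 1" using apos by (simp add: a_def sum_divide_distrib[symmetric])
    finally have l: "(\<Sum>p\<in>P. \<bar>f p / a - g p / b\<bar>) = 1" .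
    have "d = a" unfolding d_def a_def using \<open>\<forall>p\<in>P. g p = 0\<close> f0
      by (intro sum.cong) (auto simp: abs_of_nonneg)
    then have "2 * d / a = 2" using apos by simp
    then show ?thesis using l by (simp add: a_def b_def d_def)
  next
    case False
    then have bpos: "b > 0" using bnn by simp
    have pw: "\<bar>f p / a - g p / b\<bar> \<le> \<bar>f p - g p\<bar> / a + g p * (\<bar>b - a\<bar> / (a * b))" for p
    proof -
      have "f p / a - g p / b = (f p - g p) / a + g p * ((b - a) / (a * b))"
        using apos bpos by (simp add: field_simps)
      then have "\<bar>f p / a - g p / b\<bar> \<le> \<bar>(f p - g p) / a\<bar> + \<bar>g p * ((b - a) / (a * b))\<bar>"
        by (metis abs_triangle_ineq)
      also have "\<dots> = \<bar>f p - g p\<bar> / a + g p * (\<bar>b - a\<bar> / (a * b))"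
        using apos bpos g0 by (simp add: abs_mult)
      finally show ?thesis .
    qed
    have "(\<Sum>p\<in>P. \<bar>f p / a - g p / b\<bar>) \<le> (\<Sum>p\<in>P. \<bar>f p - g p\<bar> / a + g p * (\<bar>b - a\<bar> / (a * b)))"
      by (rule sum_mono) (rule pw)
    also have "\<dots> = d / a + b * (\<bar>b - a\<bar> / (a * b))"
      by (simp add: sum.distrib d_def b_def sum_divide_distrib[symmetric] sum_distrib_right[symmetric])
    also have "\<dots> = d / a + \<bar>b - a\<bar> / a" using bpos by simp
    also have "\<dots> \<le> 2 * d / a" using bad apos by (simp add: divide_right_mono field_simps)
    finally show ?thesis by (simp add: a_def b_def d_def)
  qed
qed

lemma telescope_id:
  fixes a :: "nat \<Rightarrow> real" and l :: real
  assumes "l \<noteq> 0"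
  shows "(\<Sum>k\<in>{1..K}. (a (k+1) - a (k-1)) / l^k) =
    (l - 1/l) * (\<Sum>k\<in>{1..K}. a k / l^k) + a (K+1) / l^K + a K / l^(K+1) - a 1 - a 0 / l"
proof (induction K)
  case 0
  then show ?case by simp
next
  case (Suc K)
  have s1: "(\<Sum>k\<in>{1..Suc K}. (a (k+1) - a (k-1)) / l^k) =
     (\<Sum>k\<in>{1..K}. (a (k+1) - a (k-1)) / l^k) + (a (K+2) - a K) / l^(K+1)" by simp
  have s2: "(\<Sum>k\<in>{1..Suc K}. a k / l^k) = (\<Sum>k\<in>{1..K}. a k / l^k) + a (K+1) / l^(K+1)" by simp
  show ?case unfolding s1 s2 Suc.IH using assms
    by (simp add: field_simps)
qed

lemma exp_beats:
  fixes l c :: real and N :: nat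
  assumes l: "l > 1" and c: "c > 0"
  shows "\<exists>m\<ge>2. real N ^ m / l ^ (2^m) \<le> c"
proof -
  obtain n where n: "2 * (real N + 1) < l ^ n" using real_arch_pow[OF l] by blast
  define B where "B = l ^ (2^n)"
  have "l ^ n \<le> l ^ (2^n)" using l by (intro power_increasing) (auto intro: less_imp_le less_exp)
  then have B: "B \<ge> 2 * (real N + 1)" using n by (simp add: B_def)
  obtain k0 where k0: "(real N + 1) ^ n / c < 2 ^ k0" using real_arch_pow[of 2 "(real N + 1) ^ n / c"] by auto
  define k where "k = k0 + 2"
  define m where "m = n + k"
  have m2: "m \<ge> 2" by (simp add: m_def k_def)
  have lpos: "l > 0" using l by simp
  have "l ^ (2^m) = B ^ (2^k)" by (simp add: m_def B_def power_add power_mult)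
  also have "\<dots> \<ge> B ^ k"
    using B by (intro power_increasing) (auto intro: less_imp_le less_exp)
  finally have lB: "l ^ (2^m) \<ge> B ^ k" .
  have "B ^ k \<ge> (2 * (real N + 1)) ^ k" using B by (intro power_mono) auto
  moreover have "(2 * (real N + 1)) ^ k = 2 ^ k * (real N + 1) ^ k" by (rule power_mult_distrib)
  ultimately have lk: "l ^ (2^m) \<ge> 2 ^ k * (real N + 1) ^ k" using lB by linarith
  have Nm: "real N ^ m \<le> (real N + 1) ^ n * (real N + 1) ^ k"
    unfolding m_def power_add[symmetric] by (intro power_mono) auto
  have pos: "(real N + 1) ^ k > 0" by simp
  have "real N ^ m / l ^ (2^m) \<le> (real N + 1) ^ n * (real N + 1) ^ k / (2 ^ k * (real N + 1) ^ k)"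
    using Nm lk lpos pos by (intro frac_le) auto
  also have "\<dots> = (real N + 1) ^ n / 2 ^ k" using pos by simp
  also have "\<dots> \<le> c"
  proof -
    have "(2::real) ^ k0 \<le> 2 ^ k" by (simp add: k_def)
    then have "c * 2 ^ k0 \<le> c * 2 ^ k" using c by (intro mult_left_mono) auto
    moreover have "(real N + 1) ^ n < c * 2 ^ k0" using k0 c by (simp add: field_simps)
    ultimately have "(real N + 1) ^ n < c * 2 ^ k" by linarith
    then show ?thesis by (simp add: field_simps)
  qed
  finally show ?thesis using m2 by blast
qed



lemma infdist_ltE:
  assumes "infdist x A < r" "A \<noteq> {}"
  shows "\<exists>a\<in>A. dist x a < r"
proof -
  have lt: "Inf ((\<lambda>a. dist x a) ` A) < r" using assms by (simp add: infdist_notempty)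
  have ne: "(\<lambda>a. dist x a) ` A \<noteq> {}" using assms(2) by simp
  from cInf_lessD[OF ne lt] obtain d where "d \<in> (\<lambda>a. dist x a) ` A" "d < r" by blast
  then show ?thesis by auto
qed

lemma net_exists:
  fixes U :: "'a::metric_space set"
  assumes tpos: "t > 0"
  shows "\<exists>Y\<subseteq>U. (\<forall>a\<in>Y. \<forall>b\<in>Y. a \<noteq> b \<longrightarrow> dist a b \<ge> t) \<and> (\<forall>u\<in>U. \<exists>y\<in>Y. dist u y < t)"
proof -
  define \<A> where "\<A> = {Y. Y \<subseteq> U \<and> (\<forall>a\<in>Y. \<forall>b\<in>Y. a \<noteq> b \<longrightarrow> dist a b \<ge> t)}"
  have "\<exists>M\<in>\<A>. \<forall>X\<in>\<A>. M \<subseteq> X \<longrightarrow> X = M"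
  proof (rule subset_Zorn')
    fix C assume C: "subset.chain \<A> C"
    then have CA: "C \<subseteq> \<A>" and tot: "\<forall>X\<in>C. \<forall>Y\<in>C. X \<subseteq> Y \<or> Y \<subseteq> X"
      unfolding subset.chain_def by blast+
    have "\<Union>C \<subseteq> U" using CA unfolding \<A>_def by blast
    moreover have "\<forall>a\<in>\<Union>C. \<forall>b\<in>\<Union>C. a \<noteq> b \<longrightarrow> dist a b \<ge> t"
    proof (intro ballI impI)
      fix a b assume a: "a \<in> \<Union>C" and b: "b \<in> \<Union>C" and ab: "a \<noteq> b"
      obtain X where X: "X \<in> C" "a \<in> X" using a by blast
      obtain Y where Y: "Y \<in> C" "b \<in> Y" using b by blast
      show "dist a b \<ge> t"
      proof (cases "X \<subseteq> Y")
        case True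
        have "Y \<in> \<A>" using CA Y by blast
        then have "\<forall>a\<in>Y. \<forall>b\<in>Y. a \<noteq> b \<longrightarrow> t \<le> dist a b" by (simp add: \<A>_def)
        then show ?thesis using X Y True ab by blast
      next
        case False
        then have YX: "Y \<subseteq> X" using tot X Y by blast
        have "X \<in> \<A>" using CA X by blast
        then have "\<forall>a\<in>X. \<forall>b\<in>X. a \<noteq> b \<longrightarrow> t \<le> dist a b" by (simp add: \<A>_def)
        then show ?thesis using X Y YX ab by blast
      qed
    qed
    ultimately show "\<Union>C \<in> \<A>" unfolding \<A>_def mem_Collect_eq by (rule conjI)
  qed
  then obtain M where M: "M \<in> \<A>" and max: "\<forall>X\<in>\<A>. M \<subseteq> X \<longrightarrow> X = M" by blast
  have "\<forall>u\<in>U. \<exists>y\<in>M. dist u y < t"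
  proof (rule ccontr)
    assume "\<not> (\<forall>u\<in>U. \<exists>y\<in>M. dist u y < t)"
    then obtain u where u: "u \<in> U" "\<forall>y\<in>M. dist u y \<ge> t" by (meson not_less)
    have MU: "M \<subseteq> U" and Msep: "\<forall>a\<in>M. \<forall>b\<in>M. a \<noteq> b \<longrightarrow> dist a b \<ge> t"
      using M unfolding \<A>_def by blast+
    have sepins: "\<forall>a\<in>insert u M. \<forall>b\<in>insert u M. a \<noteq> b \<longrightarrow> dist a b \<ge> t"
    proof (intro ballI impI)
      fix a b assume a: "a \<in> insert u M" and b: "b \<in> insert u M" and ab: "a \<noteq> b"
      show "dist a b \<ge> t"
      proof (cases "a = u")
        case True
        then have "b \<in> M" using b ab by blast
        then show ?thesis using True u(2) by blast
      next
        case False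
        then have aM: "a \<in> M" using a by blast
        show ?thesis
        proof (cases "b = u")
          case True
          then have "dist u a \<ge> t" using aM u(2) by blast
          then show ?thesis using True by (metis dist_commute)
        next
          case False
          then have "b \<in> M" using b by blast
          then show ?thesis using aM Msep ab by blast
        qed
      qed
    qed
    have "insert u M \<subseteq> U" using MU u(1) by blast
    then have "insert u M \<in> \<A>" unfolding \<A>_def mem_Collect_eq using sepins by (rule conjI)
    then have "insert u M = M" using max by blast
    then have "u \<in> M" by blast
    then have "dist u u \<ge> t" using u by blast
    then show False using tpos by simp
  qed
  moreover have "M \<subseteq> U" "\<forall>a\<in>M. \<forall>b\<in>M. a \<noteq> b \<longrightarrow> dist a b \<ge> t"
    using M unfolding \<A>_def by blast+
  ultimately show ?thesis by (intro exI[of _ M] conjI)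
qed

lemma count_net:
  fixes U Y :: "'a::metric_space set"
  assumes dbl: "ls_doubling N D U" and Y: "Y \<subseteq> U"
    and sep: "\<forall>a\<in>Y. \<forall>b\<in>Y. a \<noteq> b \<longrightarrow> dist a b \<ge> 2*T" and T: "T > 0" "D \<le> T"
  shows "finite (Y \<inter> ball z (2^m * T)) \<and> card (Y \<inter> ball z (2^m * T)) \<le> N^m"
proof (induction m arbitrary: z)
  case 0
  have sub: "\<forall>a\<in>Y \<inter> ball z T. \<forall>b\<in>Y \<inter> ball z T. a = b"
  proof (intro ballI)
    fix a b assume a: "a \<in> Y \<inter> ball z T" and b: "b \<in> Y \<inter> ball z T"
    have "dist a b \<le> dist z a + dist z b" by (metis dist_commute dist_triangle)
    then have "dist a b < 2*T" using a b by auto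
    then show "a = b" using sep a b by force
  qed
  show ?case
  proof (cases "Y \<inter> ball z T = {}")
    case True
    then show ?thesis by simp
  next
    case False
    then obtain a where a: "a \<in> Y \<inter> ball z T" by blast
    then have sa: "Y \<inter> ball z T \<subseteq> {a}" using sub by blast
    have f1: "finite (Y \<inter> ball z T)" by (rule finite_subset[OF sa]) simp
    have "card (Y \<inter> ball z T) \<le> card {a}" by (rule card_mono) (simp, rule sa)
    then have "finite (Y \<inter> ball z T) \<and> card (Y \<inter> ball z T) \<le> 1" using f1 by simp
    then show ?thesis by simp
  qed
next
  case (Suc m)
  define r where "r = 2^m * T"
  have "1 * T \<le> 2^m * T" using T by (intro mult_right_mono) auto
  then have rD: "r \<ge> D" using T unfolding r_def by linarith
  obtain C where C: "finite C" "card C \<le> N" "ball z (2 * r) \<inter> U \<subseteq> (\<Union>c\<in>C. ball c r)"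
    using dbl rD unfolding ls_doubling_def by blast
  have eq: "2 ^ Suc m * T = 2 * r" by (simp add: r_def)
  have sub: "Y \<inter> ball z (2 * r) \<subseteq> (\<Union>c\<in>C. Y \<inter> ball c r)" using C(3) Y by blast
  have fin: "finite (\<Union>c\<in>C. Y \<inter> ball c r)" apply (rule finite_UN_I[OF C(1)]) using Suc.IH unfolding r_def by blast
  have "card (Y \<inter> ball z (2 * r)) \<le> card (\<Union>c\<in>C. Y \<inter> ball c r)"
    by (rule card_mono[OF fin sub])
  also have "\<dots> \<le> (\<Sum>c\<in>C. card (Y \<inter> ball c r))" by (rule card_UN_le[OF C(1)])
  also have "\<dots> \<le> (\<Sum>c\<in>C. N^m)" using Suc.IH by (intro sum_mono) (simp add: r_def)
  also have "\<dots> = card C * N^m" by simp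
  also have "\<dots> \<le> N * N^m" using C(2) by simp
  finally have cardle: "card (Y \<inter> ball z (2 * r)) \<le> N ^ Suc m" by simp
  have finz: "finite (Y \<inter> ball z (2 * r))" using finite_subset[OF sub fin] .
  show ?case unfolding eq using cardle finz by blast
qed



lemma ind_sum:
  fixes Y :: "'a::metric_space set"
  assumes "finite P" "Y \<inter> ball z r \<subseteq> P"
  shows "(\<Sum>p\<in>P. (if p \<in> Y \<and> dist z p < r then 1 else 0::real)) = real (card (Y \<inter> ball z r))"
proof -
  have "(\<Sum>p\<in>P. (if p \<in> Y \<and> dist z p < r then 1 else 0::real)) = (\<Sum>p\<in>{p\<in>P. p \<in> Y \<and> dist z p < r}. 1)"
    using assms(1) by (simp add: sum.inter_filter[symmetric])
  also have "{p\<in>P. p \<in> Y \<and> dist z p < r} = Y \<inter> ball z r" using assms(2) by auto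
  finally show ?thesis by simp
qed

lemma ind_diff:
  fixes Y :: "'a::metric_space set"
  assumes "dist x y < T"
  shows "\<bar>(if p \<in> Y \<and> dist x p < r then 1 else 0::real) - (if p \<in> Y \<and> dist y p < r then 1 else 0)\<bar>
     \<le> (if p \<in> Y \<and> dist x p < r + T then 1 else 0) - (if p \<in> Y \<and> dist x p < r - T then 1 else 0)"
proof -
  have t1: "dist y p \<le> dist x p + dist x y" by (metis dist_commute dist_triangle)
  have t2: "dist x p \<le> dist y p + dist x y" using dist_triangle[of x p y] by linarith
  show ?thesis using assms t1 t2 by auto
qed

definition goodm :: "nat \<Rightarrow> real \<Rightarrow> real \<Rightarrow> real \<Rightarrow> real \<Rightarrow> 'a::metric_space set \<Rightarrow> ('a \<Rightarrow> 'a \<Rightarrow> real) \<Rightarrow> bool" where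
  "goodm M S L R \<delta> U \<xi> \<longleftrightarrow>
     (\<forall>x. (\<forall>p. \<xi> x p \<ge> 0) \<and> finite (fsupp (\<xi> x)) \<and> card (fsupp (\<xi> x)) \<le> M \<and> fsupp (\<xi> x) \<subseteq> ball x S) \<and>
     (\<forall>x. infdist x U < L \<longrightarrow> sum (\<xi> x) (fsupp (\<xi> x)) = 1) \<and>
     (\<forall>x y. infdist x U < L \<longrightarrow> dist x y < R \<longrightarrow>
        (\<Sum>p\<in>fsupp (\<xi> x) \<union> fsupp (\<xi> y). \<bar>\<xi> x p - \<xi> y p\<bar>) \<le> \<delta>)"

lemma doubling_meas:
  fixes N :: nat and D L R \<delta> :: real
  assumes L: "L > 0" and R: "R > 0" and \<delta>: "\<delta> > 0"
  shows "\<exists>S>0. \<exists>M::nat. \<forall>U::'a::metric_space set. ls_doubling N D U \<and> U \<noteq> {} \<longrightarrow> (\<exists>\<xi>. goodm M S L R \<delta> U \<xi>)"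
proof -
  define T where "T = max D (max L (max R 1))"
  have Tpos: "T > 0" and TD: "D \<le> T" and TL: "L \<le> T" and TR: "R \<le> T"
    unfolding T_def by auto
  define l where "l = 1 + \<delta>/8"
  have l1: "l > 1" using \<delta> by (simp add: l_def)
  have lpos: "l > 0" using l1 by simp
  have c: "\<delta> / (8 * l^4) > 0" using \<delta> lpos by simp
  obtain m where m2: "m \<ge> 2" and mb: "real N ^ m / l ^ (2^m) \<le> \<delta> / (8 * l^4)"
    using exp_beats[OF l1 c] by blast
  define K :: nat where "K = 2^m - 1"
  have K4: "(4::nat) \<le> 2^m"
  proof -
    have "(2::nat)^2 \<le> 2^m" using m2 by (intro power_increasing) auto
    then show ?thesis by simp
  qed
  have K4r: "(4::real) \<le> 2^m" using of_nat_mono[OF K4, where 'a=real] by simp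
  have K3: "3 \<le> K" using K4 by (simp add: K_def)
  have K1: "K + 1 = 2^m" using K4 by (simp add: K_def)
  have KT: "real K * T \<le> 2^m * T"
  proof -
    have "real K \<le> 2^m" using K1 by (metis le_add1 of_nat_le_iff of_nat_numeral of_nat_power)
    then show ?thesis using Tpos by (intro mult_right_mono) auto
  qed
  define S where "S = 2^m * T"
  have Spos: "S > 0" using Tpos by (simp add: S_def)
  show ?thesis
  proof (intro exI[of _ S] conjI Spos exI[of _ "N^m"] allI impI)
    fix U :: "'a set" assume UU: "ls_doubling N D U \<and> U \<noteq> {}"
    then have dbl: "ls_doubling N D U" and Une: "U \<noteq> {}" by auto
    have tt: "2 * T > 0" using Tpos by simp
    obtain Y where YU: "Y \<subseteq> U" and sep: "\<forall>a\<in>Y. \<forall>b\<in>Y. a \<noteq> b \<longrightarrow> dist a b \<ge> 2*T"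
      and cov: "\<forall>u\<in>U. \<exists>y\<in>Y. dist u y < 2*T"
      using net_exists[OF tt, of U] by blast
    have cnt: "finite (Y \<inter> ball z (2^j * T)) \<and> card (Y \<inter> ball z (2^j * T)) \<le> N^j" for z j
      by (rule count_net[OF dbl YU sep Tpos TD])
    define I where "I z r p = (if p \<in> Y \<and> dist z p < r then 1 else 0::real)" for z r p
    define F where "F z p = (\<Sum>k\<in>{1..K}. I z (real k * T) p / l^k)" for z p
    define a where "a z j = real (card (Y \<inter> ball z (real j * T)))" for z j
    define Z where "Z z = (\<Sum>k\<in>{1..K}. a z k / l^k)" for z
    define \<xi> where "\<xi> z p = F z p / Z z" for z p
    have I0: "I z r p \<ge> 0" for z r p by (simp add: I_def)
    have F0: "F z p \<ge> 0" for z p unfolding F_def using I0 lpos by (intro sum_nonneg) auto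
    have a0: "a z j \<ge> 0" for z j by (simp add: a_def)
    have Z0: "Z z \<ge> 0" for z unfolding Z_def using a0 lpos by (intro sum_nonneg) auto
    have xi0: "\<xi> z p \<ge> 0" for z p using F0 Z0 by (simp add: \<xi>_def)
    define B where "B z = Y \<inter> ball z (2^m * T)" for z
    have Bfin: "finite (B z)" and Bcard: "card (B z) \<le> N^m" for z using cnt[of z m] by (auto simp: B_def)
    have suppB: "fsupp (\<xi> z) \<subseteq> B z" for z
    proof
      fix p assume "p \<in> fsupp (\<xi> z)"
      then have "F z p \<noteq> 0" by (simp add: fsupp_def \<xi>_def)
      then obtain k where k: "k \<in> {1..K}" "I z (real k * T) p / l^k \<noteq> 0"
        unfolding F_def by (meson sum.not_neutral_contains_not_neutral)
      then have "p \<in> Y" "dist z p < real k * T" by (auto simp: I_def split: if_splits)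
      moreover have "real k * T \<le> real K * T" using k(1) Tpos by (intro mult_right_mono) auto
      ultimately show "p \<in> B z" using KT by (auto simp: B_def)
    qed
    have sumF: "(\<Sum>p\<in>P. F z p) = Z z" if "finite P" "B z \<subseteq> P" for z P
    proof -
      have "(\<Sum>p\<in>P. F z p) = (\<Sum>k\<in>{1..K}. (\<Sum>p\<in>P. I z (real k * T) p) / l^k)"
        unfolding F_def by (simp add: sum.swap[of _ P] sum_divide_distrib)
      also have "\<dots> = Z z"
        unfolding Z_def
      proof (rule sum.cong[OF refl])
        fix k assume k: "k \<in> {1..K}"
        have "real k * T \<le> 2^m * T" using k KT Tpos by (smt (verit) atLeastAtMost_iff mult_right_mono of_nat_le_iff)
        then have "Y \<inter> ball z (real k * T) \<subseteq> P" using that(2) by (auto simp: B_def)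
        then show "(\<Sum>p\<in>P. I z (real k * T) p) / l^k = a z k / l^k"
          unfolding I_def a_def using ind_sum[OF that(1)] by simp
      qed
      finally show ?thesis .
    qed
    have Zpos: "Z z \<ge> 1 / l^3" if zU: "infdist z U < L" for z
    proof -
      obtain u where u: "u \<in> U" "dist z u < L" using infdist_ltE[OF zU Une] by blast
      obtain y where y: "y \<in> Y" "dist u y < 2*T" using cov u(1) by blast
      have "dist z y \<le> dist z u + dist u y" by (rule dist_triangle)
      then have "dist z y < 3 * T" using u(2) y(2) TL by linarith
      then have yin: "y \<in> Y \<inter> ball z (real (3::nat) * T)" using y(1) by simp
      have "3 * T \<le> 2^m * T" using K4r Tpos by (intro mult_right_mono) auto
      then have "Y \<inter> ball z (real (3::nat) * T) \<subseteq> B z" by (auto simp: B_def)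
      then have "finite (Y \<inter> ball z (real (3::nat) * T))" using Bfin finite_subset by blast
      then have "card (Y \<inter> ball z (real (3::nat) * T)) > 0" using yin by (auto simp: card_gt_0_iff)
      then have "a z 3 \<ge> 1" unfolding a_def by simp
      then have "1 / l^3 \<le> a z 3 / l^3" using lpos by (simp add: divide_right_mono)
      also have "\<dots> \<le> Z z" unfolding Z_def
        by (rule member_le_sum[of 3 "{1..K}" "\<lambda>k. a z k / l^k"]) (use K3 a0 lpos in auto)
      finally show ?thesis .
    qed
    have G1: "\<forall>x. (\<forall>p. \<xi> x p \<ge> 0) \<and> finite (fsupp (\<xi> x)) \<and> card (fsupp (\<xi> x)) \<le> N^m \<and> fsupp (\<xi> x) \<subseteq> ball x S"
    proof
      fix x
      have "fsupp (\<xi> x) \<subseteq> ball x S" using suppB[of x] by (auto simp: B_def S_def)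
      moreover have "finite (fsupp (\<xi> x))" using suppB[of x] Bfin finite_subset by blast
      moreover have "card (fsupp (\<xi> x)) \<le> N^m" using card_mono[OF Bfin suppB[of x]] Bcard[of x] by linarith
      ultimately show "(\<forall>p. \<xi> x p \<ge> 0) \<and> finite (fsupp (\<xi> x)) \<and> card (fsupp (\<xi> x)) \<le> N^m \<and> fsupp (\<xi> x) \<subseteq> ball x S"
        using xi0 by blast
    qed
    have G2: "\<forall>x. infdist x U < L \<longrightarrow> sum (\<xi> x) (fsupp (\<xi> x)) = 1"
    proof (intro allI impI)
      fix x assume x: "infdist x U < L"
      have Zp: "Z x > 0" using Zpos[OF x] lpos by (smt (verit) divide_pos_pos zero_less_power)
      have "sum (\<xi> x) (fsupp (\<xi> x)) = sum (\<xi> x) (B x)" by (rule sum_fsupp_eq[OF Bfin suppB])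
      also have "\<dots> = (\<Sum>p\<in>B x. F x p) / Z x" by (simp add: \<xi>_def sum_divide_distrib)
      also have "\<dots> = 1" using sumF[OF Bfin order_refl] Zp by simp
      finally show "sum (\<xi> x) (fsupp (\<xi> x)) = 1" .
    qed
    have G3: "\<forall>x y. infdist x U < L \<longrightarrow> dist x y < R \<longrightarrow>
        (\<Sum>p\<in>fsupp (\<xi> x) \<union> fsupp (\<xi> y). \<bar>\<xi> x p - \<xi> y p\<bar>) \<le> \<delta>"
    proof (intro allI impI)
      fix x y assume xU: "infdist x U < L" and dxy: "dist x y < R"
      have dxyT: "dist x y < T" using dxy TR by linarith
      have Zx: "Z x \<ge> 1/l^3" using Zpos[OF xU] .
      have Zxp: "Z x > 0" using Zx lpos by (smt (verit) divide_pos_pos zero_less_power)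
      define P where "P = Y \<inter> ball x (2^(m+1) * T)"
      have Pfin: "finite P" using cnt[of x "m+1"] by (simp add: P_def)
      have TmT: "T \<le> 2^m * T" using K4r Tpos by (intro mult_right_mono[of 1 "2^m" T, simplified]) auto
      have m1: "2^(m+1) * T = 2 * (2^m * T)" by simp
      have BxP: "B x \<subseteq> P"
      proof
        fix p assume "p \<in> B x"
        then have p: "p \<in> Y" "dist x p < 2^m * T" by (auto simp: B_def)
        then have "dist x p < 2 * (2^m * T)" using TmT Tpos by linarith
        then show "p \<in> P" using p(1) unfolding P_def m1 by simp
      qed
      have ByP: "B y \<subseteq> P"
      proof
        fix p assume "p \<in> B y"
        then have p: "p \<in> Y" "dist y p < 2^m * T" by (auto simp: B_def)
        have "dist x p \<le> dist x y + dist y p" by (rule dist_triangle)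
        then have "dist x p < 2 * (2^m * T)" using p(2) dxyT TmT by linarith
        then show "p \<in> P" using p(1) unfolding P_def m1 by simp
      qed
      have sup: "fsupp (\<xi> x) \<union> fsupp (\<xi> y) \<subseteq> P" using suppB[of x] suppB[of y] BxP ByP by blast
      have s1: "(\<Sum>p\<in>fsupp (\<xi> x) \<union> fsupp (\<xi> y). \<bar>\<xi> x p - \<xi> y p\<bar>) = (\<Sum>p\<in>P. \<bar>\<xi> x p - \<xi> y p\<bar>)"
        by (rule sum.mono_neutral_left[OF Pfin sup]) (auto simp: fsupp_def)
      have ZxP: "Z x = (\<Sum>p\<in>P. F x p)" using sumF[OF Pfin BxP] by simp
      have ZyP: "Z y = (\<Sum>p\<in>P. F y p)" using sumF[OF Pfin ByP] by simp
      define V where "V = (\<Sum>p\<in>P. \<bar>F x p - F y p\<bar>)"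
      have s2: "(\<Sum>p\<in>P. \<bar>\<xi> x p - \<xi> y p\<bar>) \<le> 2 * V / Z x"
      proof -
        have "(\<Sum>p\<in>P. \<bar>F x p / sum (F x) P - F y p / sum (F y) P\<bar>) \<le> 2 * (\<Sum>p\<in>P. \<bar>F x p - F y p\<bar>) / sum (F x) P"
          using normalize_l1[OF Pfin, of "F x" "F y"] F0 Zxp ZxP by simp
        then show ?thesis unfolding \<xi>_def V_def ZxP ZyP .
      qed
      define J where "J r p = I x r p" for r p
      have pw: "\<bar>F x p - F y p\<bar> \<le> (\<Sum>k\<in>{1..K}. (I x (real k * T + T) p - I x (real k * T - T) p) / l^k)" for p
      proof -
        have eqF: "F x p - F y p = (\<Sum>k\<in>{1..K}. (I x (real k * T) p - I y (real k * T) p) / l^k)"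
          unfolding F_def by (simp add: sum_subtractf diff_divide_distrib)
        have "\<bar>F x p - F y p\<bar> \<le> (\<Sum>k\<in>{1..K}. \<bar>(I x (real k * T) p - I y (real k * T) p) / l^k\<bar>)"
          unfolding eqF by (rule sum_abs)
        also have "\<dots> \<le> (\<Sum>k\<in>{1..K}. (I x (real k * T + T) p - I x (real k * T - T) p) / l^k)"
        proof (rule sum_mono)
          fix k assume "k \<in> {1..K}"
          have "\<bar>I x (real k * T) p - I y (real k * T) p\<bar> \<le> I x (real k * T + T) p - I x (real k * T - T) p"
            unfolding I_def by (rule ind_diff[OF dxyT])
          then show "\<bar>(I x (real k * T) p - I y (real k * T) p) / l^k\<bar> \<le> (I x (real k * T + T) p - I x (real k * T - T) p) / l^k"
            using lpos by (simp add: abs_divide divide_right_mono)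
        qed
        finally show ?thesis .
      qed
      have sumI: "(\<Sum>p\<in>P. I x (real j * T) p) = a x j" if "j \<le> 2^m" for j
      proof -
        have "real j \<le> 2^m" using of_nat_mono[OF that, where 'a=real] by simp
        then have jT: "real j * T \<le> 2^m * T" using Tpos by (intro mult_right_mono) auto
        have "Y \<inter> ball x (real j * T) \<subseteq> P"
        proof
          fix p assume "p \<in> Y \<inter> ball x (real j * T)"
          then have pY: "p \<in> Y" and dp: "dist x p < real j * T" by auto
          then have "dist x p < 2 * (2^m * T)" using jT TmT Tpos by linarith
          then show "p \<in> P" unfolding P_def m1 using pY by simp
        qed
        then show ?thesis unfolding I_def a_def by (rule ind_sum[OF Pfin])
      qed
      have V1: "V \<le> (\<Sum>k\<in>{1..K}. (a x (k+1) - a x (k-1)) / l^k)"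
      proof -
        have "V \<le> (\<Sum>p\<in>P. \<Sum>k\<in>{1..K}. (I x (real k * T + T) p - I x (real k * T - T) p) / l^k)"
          unfolding V_def by (rule sum_mono) (rule pw)
        also have "\<dots> = (\<Sum>k\<in>{1..K}. \<Sum>p\<in>P. (I x (real k * T + T) p - I x (real k * T - T) p) / l^k)"
          by (rule sum.swap)
        also have "\<dots> = (\<Sum>k\<in>{1..K}. ((\<Sum>p\<in>P. I x (real k * T + T) p) - (\<Sum>p\<in>P. I x (real k * T - T) p)) / l^k)"
          by (rule sum.cong[OF refl]) (simp add: sum_divide_distrib[symmetric] sum_subtractf)
        also have "\<dots> = (\<Sum>k\<in>{1..K}. (a x (k+1) - a x (k-1)) / l^k)"
        proof (rule sum.cong[OF refl])
          fix k assume k: "k \<in> {1..K}"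
          have e1: "real k * T + T = real (k+1) * T" by (simp add: algebra_simps)
          have e2: "real k * T - T = real (k-1) * T" using k by (simp add: of_nat_diff algebra_simps)
          have "k + 1 \<le> 2^m" "k - 1 \<le> 2^m" using k K1 by auto
          then have h1: "(\<Sum>p\<in>P. I x (real (k+1) * T) p) = a x (k+1)"
            and h2: "(\<Sum>p\<in>P. I x (real (k-1) * T) p) = a x (k-1)" using sumI by blast+
          show "((\<Sum>p\<in>P. I x (real k * T + T) p) - (\<Sum>p\<in>P. I x (real k * T - T) p)) / l^k =
              (a x (k+1) - a x (k-1)) / l^k"
            unfolding e1 e2 h1 h2 ..
        qed
        finally show ?thesis .
      qed
      have ax0: "a x 0 = 0" by (simp add: a_def)
      have aK: "a x K \<le> a x (K+1)"
      proof -
        have "Y \<inter> ball x (real K * T) \<subseteq> Y \<inter> ball x (real (K+1) * T)" using Tpos by (auto simp: algebra_simps)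
        moreover have "finite (Y \<inter> ball x (real (K+1) * T))" using cnt[of x m] K1 by simp
        ultimately show ?thesis unfolding a_def by (simp add: card_mono)
      qed
      have aK1: "a x (K+1) \<le> real N ^ m"
      proof -
        have "a x (K+1) = real (card (B x))" unfolding a_def B_def using K1 by simp
        also have "\<dots> \<le> real N ^ m" using Bcard[of x] by (metis of_nat_le_iff of_nat_power)
        finally show ?thesis .
      qed
      have lK: "l^K > 0" "l^(K+1) > 0" using lpos by auto
      have V2: "V \<le> (l - 1/l) * Z x + 2 * (real N ^ m / l^K)"
      proof -
        have "V \<le> (l - 1/l) * Z x + a x (K+1) / l^K + a x K / l^(K+1) - a x 1 - a x 0 / l"
          using V1 telescope_id[of l "a x" K] lpos unfolding Z_def by simp
        moreover have "a x K / l^(K+1) \<le> a x (K+1) / l^K"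
        proof -
          have "a x K / l^(K+1) \<le> a x (K+1) / l^(K+1)" using aK lK by (simp add: divide_right_mono)
          also have "\<dots> \<le> a x (K+1) / l^K" using a0[of x "K+1"] lK l1
            by (intro divide_left_mono) (auto intro: power_increasing)
          finally show ?thesis .
        qed
        moreover have "a x (K+1) / l^K \<le> real N ^ m / l^K" using aK1 lK by (simp add: divide_right_mono)
        moreover have "a x 0 / l = 0" by (simp add: ax0)
        ultimately show ?thesis using a0[of x 1] by linarith
      qed
      have lm: "l^(2^m) = l^K * l" using K1 by (metis power_Suc2 Suc_eq_plus1)
      have fin1: "2 * V / Z x \<le> 2 * (l - 1/l) + 4 * (real N ^ m / l^K) * (1 / Z x)"
      proof -
        have "2 * V / Z x \<le> 2 * ((l - 1/l) * Z x + 2 * (real N ^ m / l^K)) / Z x"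
          using V2 Zxp by (simp add: divide_right_mono)
        also have "\<dots> = 2 * (l - 1/l) + 4 * (real N ^ m / l^K) * (1 / Z x)"
          using Zxp by (simp add: field_simps)
        finally show ?thesis .
      qed
      have iz: "1 / Z x \<le> l^3"
      proof -
        have "1 / Z x \<le> 1 / (1 / l^3)" using Zx lpos Zxp by (intro divide_left_mono) auto
        then show ?thesis by simp
      qed
      have q1: "4 * (real N ^ m / l^K) * (1 / Z x) \<le> 4 * (real N ^ m / l^K) * l^3"
        using iz lK by (intro mult_left_mono) auto
      have q2: "(real N ^ m / l^K) * l^3 = (real N ^ m / l^(2^m)) * l^4"
      proof -
        have l4: "l * l^3 = l^4" by (simp add: eval_nat_numeral)
        show ?thesis using lK lpos l4 unfolding lm by (simp add: field_simps)
      qed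
      have q3: "(real N ^ m / l^(2^m)) * l^4 \<le> \<delta> / 8"
      proof -
        have "(real N ^ m / l^(2^m)) * l^4 \<le> \<delta> / (8 * l^4) * l^4" using mb lpos by (intro mult_right_mono) auto
        also have "\<dots> = \<delta> / 8" using lpos by simp
        finally show ?thesis .
      qed
      have q4: "2 * (l - 1/l) \<le> \<delta> / 2"
      proof -
        have "l - 1/l \<le> 2 * (l - 1)"
        proof -
          have sq: "(l - 1) * (l - 1) \<ge> 0" by simp
          have "l - 1 \<le> l * (l - 1)" using sq by (simp add: algebra_simps)
          then have "(l - 1) / l \<le> l - 1" using lpos by (simp add: divide_le_eq mult.commute)
          moreover have "1 - 1/l = (l - 1) / l" using lpos by (simp add: field_simps)
          ultimately have h: "1 - 1/l \<le> l - 1" by simp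
          have e: "l - 1/l = (l - 1) + (1 - 1/l)" by simp
          show ?thesis unfolding e using h by simp
        qed
        then show ?thesis by (simp add: l_def)
      qed
      show "(\<Sum>p\<in>fsupp (\<xi> x) \<union> fsupp (\<xi> y). \<bar>\<xi> x p - \<xi> y p\<bar>) \<le> \<delta>"
        unfolding s1 using s2 fin1 q1 q2 q3 q4 by linarith
    qed
    show "\<exists>\<xi>. goodm (N^m) S L R \<delta> U \<xi>" unfolding goodm_def
      by (rule exI[of _ \<xi>], intro conjI G1 G2 G3)
  qed
qed



lemma geom_sum_le: "(\<Sum>i\<le>n. (1::real) / 2^i) \<le> 2"
proof -
  have "(\<Sum>i\<le>n. (1::real) / 2^i) = 2 - 1 / 2^n"
    by (induction n) (simp_all add: field_simps)
  then show ?thesis by simp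
qed

lemma set_dist_le:
  assumes "a \<in> A" "b \<in> B"
  shows "set_dist A B \<le> dist a b"
  unfolding set_dist_def
proof (rule cInf_lower)
  show "dist a b \<in> {dist a b |a b. a \<in> A \<and> b \<in> B}" using assms by blast
  show "bdd_below {dist a b |a b. a \<in> A \<and> b \<in> B}" by (rule bdd_belowI[of _ 0]) auto
qed

lemma whC_realA:
  assumes W: "weak_hyperbolic_C TYPE('a::metric_space)"
  shows "realA TYPE('a)"
  unfolding realA_def
proof (intro allI impI)
  fix R \<epsilon> :: real assume R: "R > 0" and \<epsilon>: "\<epsilon> > 0"
  define e where "e = min \<epsilon> 1"
  have e: "e > 0" "e \<le> 1" "e \<le> \<epsilon>" using \<epsilon> by (auto simp: e_def)
  define Ls :: "nat \<Rightarrow> real" where "Ls i = R * 2^(i+3) / e" for i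
  have Lpos: "Ls i > 0" for i using R e by (simp add: Ls_def)
  have RL: "R \<le> Ls i" for i
  proof -
    have "(1::real) \<le> 2^(i+3)" by simp
    then have "e \<le> 2^(i+3)" using e by linarith
    then have "R * e \<le> R * 2^(i+3)" using R by (intro mult_left_mono) auto
    then show ?thesis using e R by (simp add: Ls_def field_simps)
  qed
  have RLi: "R / Ls i = e / 8 * (1 / 2^i)" for i
    using R e by (simp add: Ls_def field_simps power_add)
  have Lmono: "Ls i \<le> Ls j" if "i \<le> j" for i j
  proof -
    have "(2::real)^(i+3) \<le> 2^(j+3)" using that by (intro power_increasing) auto
    then have "R * 2^(i+3) \<le> R * 2^(j+3)" using R by (intro mult_left_mono) auto
    then show ?thesis using e by (simp add: Ls_def divide_right_mono)
  qed
  have Rs: "\<forall>i. 3 * Ls i > 0" using Lpos by simp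
  obtain n and \<U> :: "nat \<Rightarrow> 'a set set" where
    Rdisj: "\<forall>i\<le>n. R_disjoint (3 * Ls i) (\<U> i)" and
    cover: "\<Union>(\<Union>i\<le>n. \<U> i) = UNIV" and
    wu: "weakly_unif_ls_doubling (\<Union>i\<le>n. \<U> i)"
  proof -
    have "\<exists>n \<U>. (\<forall>i\<le>n. R_disjoint (3 * Ls i) (\<U> i)) \<and> \<Union>(\<Union>i\<le>n. \<U> i) = (UNIV::'a set) \<and>
        weakly_unif_ls_doubling (\<Union>i\<le>n. \<U> i)"
    proof -
      have Rs': "\<And>i. 0 < 3 * Ls i" using Rs by blast
      note H = W[unfolded weak_hyperbolic_C_def, rule_format, of "\<lambda>i. 3 * Ls i"]
      show ?thesis by (rule H[OF Rs'])
    qed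
    then show ?thesis using that by blast
  qed
  obtain N D where ND: "\<forall>U\<in>(\<Union>i\<le>n. \<U> i). ls_doubling N D U"
    using wu unfolding weakly_unif_ls_doubling_def by blast
  define \<delta> where "\<delta> = e / (8 * (real n + 1))"
  have \<delta>pos: "\<delta> > 0" using e by (simp add: \<delta>_def)
  have Lnpos: "Ls n > 0" by (rule Lpos)
  obtain S M where Spos: "S > 0" and SM: "\<forall>U::'a set. ls_doubling N D U \<and> U \<noteq> {} \<longrightarrow> (\<exists>\<xi>. goodm M S (Ls n) R \<delta> U \<xi>)"
    using doubling_meas[OF Lnpos R \<delta>pos, of N D] by blast
  define good :: "'a set \<Rightarrow> ('a \<Rightarrow> 'a \<Rightarrow> real) \<Rightarrow> bool" where "good U \<xi> \<longleftrightarrow> goodm M S (Ls n) R \<delta> U \<xi>" for U \<xi>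
  define \<Xi> where "\<Xi> U = (SOME \<xi>. good U \<xi>)" for U
  have \<Xi>good: "good U (\<Xi> U)" if "U \<in> \<U> i" "i \<le> n" for U i
  proof -
    have "ls_doubling N D U" using ND that by blast
    moreover have "U \<noteq> {}" using Rdisj that unfolding R_disjoint_def by blast
    ultimately have "\<exists>\<xi>. good U \<xi>" using SM unfolding good_def by simp
    then show ?thesis unfolding \<Xi>_def by (rule someI_ex)
  qed
  have uniq: "U = V" if hyp: "i \<le> n" "U \<in> \<U> i" "V \<in> \<U> i" "infdist x U < Ls i" "infdist y V < Ls i"
    "dist x y < R" for i U V x y
  proof (rule ccontr)
    assume UV: "U \<noteq> V"
    have ne: "U \<noteq> {}" "V \<noteq> {}" using Rdisj hyp unfolding R_disjoint_def by blast+
    have sd: "set_dist U V > 3 * Ls i" using Rdisj hyp UV unfolding R_disjoint_def by blast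
    obtain a where a: "a \<in> U" "dist x a < Ls i" using infdist_ltE[OF hyp(4) ne(1)] by blast
    obtain b where b: "b \<in> V" "dist y b < Ls i" using infdist_ltE[OF hyp(5) ne(2)] by blast
    have "dist a b \<le> dist a x + dist x b" by (rule dist_triangle)
    moreover have "dist x b \<le> dist x y + dist y b" by (rule dist_triangle)
    moreover have "dist a x = dist x a" by (rule dist_commute)
    ultimately have "dist a b < 3 * Ls i" using a b hyp(6) RL[of i] by linarith
    moreover have "set_dist U V \<le> dist a b" by (rule set_dist_le[OF a(1) b(1)])
    ultimately show False using sd by linarith
  qed
  define ex where "ex i x \<longleftrightarrow> (\<exists>U\<in>\<U> i. infdist x U < Ls i)" for i x
  define c where "c i x = (SOME U. U \<in> \<U> i \<and> infdist x U < Ls i)" for i x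
  have cspec: "c i x \<in> \<U> i \<and> infdist x (c i x) < Ls i" if "ex i x" for i x
    using that unfolding ex_def c_def by (metis (mono_tags, lifting) someI_ex)
  define \<phi> where "\<phi> i x = (if ex i x then 1 - infdist x (c i x) / Ls i else 0)" for i x
  define \<xi> where "\<xi> i x = \<Xi> (c i x) x" for i x
  have \<phi>0: "\<phi> i x \<ge> 0" for i x
  proof (cases "ex i x")
    case True
    then have "infdist x (c i x) / Ls i \<le> 1" using cspec[OF True] Lpos[of i] by simp
    then show ?thesis using True by (simp add: \<phi>_def)
  qed (simp add: \<phi>_def)
  have \<phi>1: "\<phi> i x \<le> 1" for i x
  proof -
    have "0 \<le> infdist x (c i x) / Ls i" using infdist_nonneg[of x "c i x"] Lpos[of i] by simp
    then show ?thesis by (simp add: \<phi>_def)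
  qed
  have G: "(\<forall>z. (\<forall>p. \<Xi> U z p \<ge> 0) \<and> finite (fsupp (\<Xi> U z)) \<and> card (fsupp (\<Xi> U z)) \<le> M \<and> fsupp (\<Xi> U z) \<subseteq> ball z S) \<and>
     (\<forall>z. infdist z U < Ls n \<longrightarrow> sum (\<Xi> U z) (fsupp (\<Xi> U z)) = 1) \<and>
     (\<forall>z w. infdist z U < Ls n \<longrightarrow> dist z w < R \<longrightarrow>
        (\<Sum>p\<in>fsupp (\<Xi> U z) \<union> fsupp (\<Xi> U w). \<bar>\<Xi> U z p - \<Xi> U w p\<bar>) \<le> \<delta>)"
    if "ex i x" "i \<le> n" "U = c i x" for i x U
    using \<Xi>good[of U i] cspec[OF that(1)] that(2,3) unfolding good_def goodm_def by blast
  have G1: "\<Xi> (c i x) z p \<ge> 0" "finite (fsupp (\<Xi> (c i x) z))" "card (fsupp (\<Xi> (c i x) z)) \<le> M"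
     "fsupp (\<Xi> (c i x) z) \<subseteq> ball z S"
    if "ex i x" "i \<le> n" for i x z p using G[OF that refl] by blast+
  have G2: "sum (\<Xi> (c i x) z) (fsupp (\<Xi> (c i x) z)) = 1"
    if "ex i x" "i \<le> n" "infdist z (c i x) < Ls i" for i x z
  proof -
    have "infdist z (c i x) < Ls n" using that(3) Lmono[OF that(2)] by linarith
    then show ?thesis using G[OF that(1,2) refl] by blast
  qed
  have G3: "(\<Sum>p\<in>fsupp (\<Xi> (c i x) z) \<union> fsupp (\<Xi> (c i x) w). \<bar>\<Xi> (c i x) z p - \<Xi> (c i x) w p\<bar>) \<le> \<delta>"
    if "ex i x" "i \<le> n" "infdist z (c i x) < Ls i" "dist z w < R" for i x z w
  proof -
    have "infdist z (c i x) < Ls n" using that(3) Lmono[OF that(2)] by linarith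
    then show ?thesis using G[OF that(1,2) refl] that(4) by blast
  qed
  define t where "t i x p = \<phi> i x * \<xi> i x p" for i x p
  have t0: "t i x p \<ge> 0" if "i \<le> n" for i x p
  proof (cases "ex i x")
    case True
    then show ?thesis using G1(1)[OF True that] \<phi>0 by (simp add: t_def \<xi>_def)
  next
    case False
    then show ?thesis by (simp add: t_def \<phi>_def)
  qed
  define PP where "PP x = (\<Union>i\<in>{i. i \<le> n \<and> ex i x}. fsupp (\<xi> i x))" for x
  have PPfin: "finite (PP x)" for x
    unfolding PP_def by (rule finite_UN_I) (auto simp: \<xi>_def intro: G1(2))
  have PPcard: "card (PP x) \<le> (n+1) * M" for x
  proof -
    have fI: "finite {i. i \<le> n \<and> ex i x}" by simp
    have "card (PP x) \<le> (\<Sum>i\<in>{i. i \<le> n \<and> ex i x}. card (fsupp (\<xi> i x)))"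
      unfolding PP_def by (rule card_UN_le[OF fI])
    also have "\<dots> \<le> (\<Sum>i\<in>{i. i \<le> n \<and> ex i x}. M)"
      by (rule sum_mono) (auto simp: \<xi>_def intro: G1(3))
    also have "\<dots> = card {i. i \<le> n \<and> ex i x} * M" by simp
    also have "\<dots> \<le> (n+1) * M"
    proof -
      have "card {i. i \<le> n \<and> ex i x} \<le> card {..n}" by (rule card_mono) auto
      then have "card {i. i \<le> n \<and> ex i x} \<le> n + 1" by simp
      then show ?thesis by (rule mult_right_mono) simp
    qed
    finally show ?thesis .
  qed
  have PPball: "PP x \<subseteq> ball x S" for x
    unfolding PP_def using G1(4) by (auto simp: \<xi>_def)
  have PPsub: "fsupp (\<xi> i x) \<subseteq> PP x" if "ex i x" "i \<le> n" for i x
  proof -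
    have "i \<in> {i. i \<le> n \<and> ex i x}" using that by simp
    then show ?thesis unfolding PP_def by (rule UN_upper)
  qed
  have tsupp: "p \<in> PP x" if "t i x p \<noteq> 0" "i \<le> n" for i x p
  proof -
    have "\<phi> i x \<noteq> 0" using that(1) by (auto simp: t_def)
    then have "ex i x" by (auto simp: \<phi>_def split: if_splits)
    moreover have "\<xi> i x p \<noteq> 0" using that(1) by (simp add: t_def)
    ultimately show ?thesis using that(2) unfolding PP_def fsupp_def by blast
  qed
  have tsum: "(\<Sum>p\<in>Q. t i x p) = \<phi> i x" if "finite Q" "PP x \<subseteq> Q" "i \<le> n" for Q i x
  proof (cases "ex i x")
    case True
    have "i \<in> {i. i \<le> n \<and> ex i x}" using True that(3) by simp
    then have "fsupp (\<xi> i x) \<subseteq> PP x" unfolding PP_def by (rule UN_upper)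
    then have sub: "fsupp (\<xi> i x) \<subseteq> Q" using that(2) by (rule order_trans)
    have inf: "infdist x (c i x) < Ls i" using cspec[OF True] by blast
    have "(\<Sum>p\<in>Q. \<xi> i x p) = sum (\<xi> i x) (fsupp (\<xi> i x))" using sum_fsupp_eq[OF that(1) sub] by simp
    also have "\<dots> = 1" unfolding \<xi>_def by (rule G2[OF True that(3) inf])
    finally have s1: "(\<Sum>p\<in>Q. \<xi> i x p) = 1" .
    have "(\<Sum>p\<in>Q. t i x p) = \<phi> i x * (\<Sum>p\<in>Q. \<xi> i x p)" unfolding t_def by (rule sum_distrib_left[symmetric])
    then show ?thesis using s1 by simp
  next
    case False
    then have "\<phi> i x = 0" by (simp add: \<phi>_def)
    then show ?thesis by (simp add: t_def)
  qed
  define h where "h x p = (\<Sum>i\<le>n. t i x p)" for x p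
  define \<Phi> where "\<Phi> x = (\<Sum>i\<le>n. \<phi> i x)" for x
  define g where "g x p = h x p / \<Phi> x" for x p
  have \<Phi>1: "\<Phi> x \<ge> 1" for x
  proof -
    have "x \<in> \<Union>(\<Union>i\<le>n. \<U> i)" by (simp only: cover UNIV_I)
    then obtain U where U: "U \<in> (\<Union>i\<le>n. \<U> i)" "x \<in> U" by (rule UnionE)
    from U(1) obtain j where j: "j \<le> n" "U \<in> \<U> j" by (auto simp: atMost_iff)
    have d0: "infdist x U < Ls j" using U(2) Lpos[of j] by simp
    then have exj: "ex j x" using j unfolding ex_def by blast
    have "c j x = U" using uniq[OF j(1) _ j(2), of "c j x" x x] cspec[OF exj] d0 R by simp
    then have "\<phi> j x = 1" using exj U(2) by (simp add: \<phi>_def)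
    moreover have "\<phi> j x \<le> \<Phi> x" unfolding \<Phi>_def
      by (rule member_le_sum) (use j \<phi>0 in auto)
    ultimately show ?thesis by simp
  qed
  have h0: "h x p \<ge> 0" for x p unfolding h_def by (rule sum_nonneg) (simp add: t0)
  have g0: "g x p \<ge> 0" for x p using h0 \<Phi>1[of x] by (simp add: g_def)
  have hsupp: "fsupp (h x) \<subseteq> PP x" for x
  proof
    fix p assume "p \<in> fsupp (h x)"
    then have "h x p \<noteq> 0" by (simp add: fsupp_def)
    then obtain i where "i \<in> {..n}" "t i x p \<noteq> 0" unfolding h_def
      by (meson sum.not_neutral_contains_not_neutral)
    then show "p \<in> PP x" using tsupp by auto
  qed
  have gsupp: "fsupp (g x) \<subseteq> PP x" for x
    using hsupp[of x] \<Phi>1[of x] by (auto simp: fsupp_def g_def)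
  have hsum: "(\<Sum>p\<in>Q. h x p) = \<Phi> x" if "finite Q" "PP x \<subseteq> Q" for Q x
  proof -
    have "(\<Sum>p\<in>Q. h x p) = (\<Sum>i\<le>n. \<Sum>p\<in>Q. t i x p)" unfolding h_def by (rule sum.swap)
    also have "\<dots> = \<Phi> x" unfolding \<Phi>_def by (rule sum.cong[OF refl]) (simp add: tsum[OF that])
    finally show ?thesis .
  qed
  have gsum1: "sum (g x) (fsupp (g x)) = 1" for x
  proof -
    have "sum (g x) (fsupp (g x)) = sum (g x) (PP x)" by (rule sum_fsupp_eq[OF PPfin gsupp])
    also have "\<dots> = (\<Sum>p\<in>PP x. h x p) / \<Phi> x" by (simp add: g_def sum_divide_distrib)
    also have "\<dots> = 1" using hsum[OF PPfin order_refl] \<Phi>1[of x] by simp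
    finally show ?thesis .
  qed
  have oneside: "\<phi> i x \<le> R / Ls i" if "ex i x" "\<not> ex i y" "dist x y < R" "i \<le> n" for i x y
  proof -
    have cU: "c i x \<in> \<U> i" using cspec[OF that(1)] by blast
    have "infdist y (c i x) \<ge> Ls i" using that(2) cU unfolding ex_def by (meson not_less)
    moreover have "infdist y (c i x) \<le> infdist x (c i x) + dist y x" by (rule infdist_triangle)
    ultimately have "Ls i - infdist x (c i x) \<le> R" using that(3) by (simp add: dist_commute)
    then have "(Ls i - infdist x (c i x)) / Ls i \<le> R / Ls i" using Lpos[of i] by (simp add: divide_right_mono)
    moreover have "\<phi> i x = (Ls i - infdist x (c i x)) / Ls i" using that(1) Lpos[of i] by (simp add: \<phi>_def field_simps)
    ultimately show ?thesis by simp
  qed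
  have var_i: "(\<Sum>p\<in>PP x \<union> PP y. \<bar>t i x p - t i y p\<bar>) \<le> R / Ls i + \<delta>"
    if "dist x y < R" "i \<le> n" for i x y
  proof -
    define Q where "Q = PP x \<union> PP y"
    have Qfin: "finite Q" using PPfin by (simp add: Q_def)
    have RLp: "R / Ls i \<ge> 0" using R Lpos[of i] by simp
    have "(\<Sum>p\<in>Q. \<bar>t i x p - t i y p\<bar>) \<le> R / Ls i + \<delta>"
    proof (cases "ex i x")
      case exx: True
      show ?thesis
      proof (cases "ex i y")
        case exy: True
        define U where "U = c i x"
        have cx: "U \<in> \<U> i" "infdist x U < Ls i" using cspec[OF exx] by (auto simp: U_def)
        have cy: "c i y \<in> \<U> i" "infdist y (c i y) < Ls i" using cspec[OF exy] by auto
        have cyU: "c i y = U" using uniq[OF that(2) cx(1) cy(1) cx(2) cy(2) that(1)] by simp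
        have pw: "\<bar>t i x p - t i y p\<bar> \<le> \<bar>\<phi> i x - \<phi> i y\<bar> * \<Xi> U y p + \<phi> i x * \<bar>\<Xi> U x p - \<Xi> U y p\<bar>" for p
        proof -
          have "t i x p - t i y p = (\<phi> i x - \<phi> i y) * \<Xi> U y p + \<phi> i x * (\<Xi> U x p - \<Xi> U y p)"
            by (simp add: t_def \<xi>_def cyU U_def algebra_simps)
          then have "\<bar>t i x p - t i y p\<bar> \<le> \<bar>(\<phi> i x - \<phi> i y) * \<Xi> U y p\<bar> + \<bar>\<phi> i x * (\<Xi> U x p - \<Xi> U y p)\<bar>"
            by (metis abs_triangle_ineq)
          also have "\<dots> = \<bar>\<phi> i x - \<phi> i y\<bar> * \<Xi> U y p + \<phi> i x * \<bar>\<Xi> U x p - \<Xi> U y p\<bar>"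
            using G1(1)[OF exx that(2), of y p] \<phi>0[of i x] by (simp add: abs_mult U_def)
          finally show ?thesis .
        qed
        have dphi: "\<bar>\<phi> i x - \<phi> i y\<bar> \<le> R / Ls i"
        proof -
          have "\<phi> i x - \<phi> i y = (infdist y U - infdist x U) / Ls i"
            using exx exy cyU Lpos[of i] by (simp add: \<phi>_def U_def field_simps)
          moreover have "\<bar>infdist y U - infdist x U\<bar> \<le> dist y x" by (rule infdist_triangle_abs)
          ultimately have "\<bar>\<phi> i x - \<phi> i y\<bar> \<le> dist y x / Ls i" using Lpos[of i] by (simp add: abs_divide divide_right_mono)
          also have "\<dots> \<le> R / Ls i" using that(1) Lpos[of i] by (simp add: dist_commute divide_right_mono)
          finally show ?thesis .
        qed
        have sy: "(\<Sum>p\<in>Q. \<Xi> U y p) = 1"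
        proof -
          have "fsupp (\<Xi> U y) \<subseteq> PP y" using PPsub[OF exy that(2)] cyU by (simp add: \<xi>_def)
          then have sub: "fsupp (\<Xi> U y) \<subseteq> Q" by (auto simp: Q_def)
          have iy: "infdist y (c i x) < Ls i" using cy cyU by (simp add: U_def)
          have "(\<Sum>p\<in>Q. \<Xi> U y p) = sum (\<Xi> U y) (fsupp (\<Xi> U y))" using sum_fsupp_eq[OF Qfin sub] by simp
          also have "\<dots> = 1" unfolding U_def by (rule G2[OF exx that(2) iy])
          finally show ?thesis .
        qed
        have sd: "(\<Sum>p\<in>Q. \<bar>\<Xi> U x p - \<Xi> U y p\<bar>) \<le> \<delta>"
        proof -
          have "fsupp (\<Xi> U y) \<subseteq> PP y" using PPsub[OF exy that(2)] cyU by (simp add: \<xi>_def)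
          moreover have "fsupp (\<Xi> U x) \<subseteq> PP x" using PPsub[OF exx that(2)] by (simp add: \<xi>_def U_def)
          ultimately have sub: "fsupp (\<Xi> U x) \<union> fsupp (\<Xi> U y) \<subseteq> Q" by (auto simp: Q_def)
          have "(\<Sum>p\<in>Q. \<bar>\<Xi> U x p - \<Xi> U y p\<bar>) = (\<Sum>p\<in>fsupp (\<Xi> U x) \<union> fsupp (\<Xi> U y). \<bar>\<Xi> U x p - \<Xi> U y p\<bar>)"
            by (rule sum.mono_neutral_right[OF Qfin sub]) (auto simp: fsupp_def)
          also have "\<dots> \<le> \<delta>" unfolding U_def by (rule G3[OF exx that(2) _ that(1)]) (use cx in \<open>simp add: U_def\<close>)
          finally show ?thesis .
        qed
        have "(\<Sum>p\<in>Q. \<bar>t i x p - t i y p\<bar>) \<le> (\<Sum>p\<in>Q. \<bar>\<phi> i x - \<phi> i y\<bar> * \<Xi> U y p + \<phi> i x * \<bar>\<Xi> U x p - \<Xi> U y p\<bar>)"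
          by (rule sum_mono) (rule pw)
        also have "\<dots> = \<bar>\<phi> i x - \<phi> i y\<bar> * (\<Sum>p\<in>Q. \<Xi> U y p) + \<phi> i x * (\<Sum>p\<in>Q. \<bar>\<Xi> U x p - \<Xi> U y p\<bar>)"
          by (simp add: sum.distrib sum_distrib_left)
        also have "\<dots> \<le> R / Ls i * 1 + 1 * \<delta>"
        proof -
          have "\<phi> i x * (\<Sum>p\<in>Q. \<bar>\<Xi> U x p - \<Xi> U y p\<bar>) \<le> 1 * \<delta>"
            using sd \<phi>0[of i x] \<phi>1[of i x] \<delta>pos by (intro mult_mono) auto
          then show ?thesis using sy dphi by simp
        qed
        finally show ?thesis by simp
      next
        case exy: False
        have "(\<Sum>p\<in>Q. \<bar>t i x p - t i y p\<bar>) = (\<Sum>p\<in>Q. t i x p)"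
          using exy t0[OF that(2)] by (intro sum.cong) (auto simp: t_def \<phi>_def)
        also have "\<dots> = \<phi> i x" by (rule tsum[OF Qfin _ that(2)]) (simp add: Q_def)
        also have "\<dots> \<le> R / Ls i" by (rule oneside[OF exx exy that(1,2)])
        finally show ?thesis using \<delta>pos by simp
      qed
    next
      case exx: False
      show ?thesis
      proof (cases "ex i y")
        case exy: True
        have "(\<Sum>p\<in>Q. \<bar>t i x p - t i y p\<bar>) = (\<Sum>p\<in>Q. t i y p)"
          using exx t0[OF that(2)] by (intro sum.cong) (auto simp: t_def \<phi>_def)
        also have "\<dots> = \<phi> i y" by (rule tsum[OF Qfin _ that(2)]) (simp add: Q_def)
        also have "\<dots> \<le> R / Ls i" using that(1) by (intro oneside[OF exy exx _ that(2)]) (simp add: dist_commute)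
        finally show ?thesis using \<delta>pos by simp
      next
        case exy: False
        have "(\<Sum>p\<in>Q. \<bar>t i x p - t i y p\<bar>) = 0"
          using exx exy by (intro sum.neutral) (auto simp: t_def \<phi>_def)
        then show ?thesis using \<delta>pos RLp by simp
      qed
    qed
    then show ?thesis by (simp add: Q_def)
  qed
  have var: "(\<Sum>p\<in>fsupp (g x) \<union> fsupp (g y). \<bar>g x p - g y p\<bar>) \<le> \<epsilon>" if dxy: "dist x y < R" for x y
  proof -
    define Q where "Q = PP x \<union> PP y"
    have Qfin: "finite Q" using PPfin by (simp add: Q_def)
    have sub: "fsupp (g x) \<union> fsupp (g y) \<subseteq> Q" using gsupp by (auto simp: Q_def)
    have s1: "(\<Sum>p\<in>fsupp (g x) \<union> fsupp (g y). \<bar>g x p - g y p\<bar>) = (\<Sum>p\<in>Q. \<bar>g x p - g y p\<bar>)"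
      by (rule sum.mono_neutral_left[OF Qfin sub]) (auto simp: fsupp_def)
    have hx: "(\<Sum>p\<in>Q. h x p) = \<Phi> x" by (rule hsum[OF Qfin]) (simp add: Q_def)
    have hy: "(\<Sum>p\<in>Q. h y p) = \<Phi> y" by (rule hsum[OF Qfin]) (simp add: Q_def)
    define V where "V = (\<Sum>p\<in>Q. \<bar>h x p - h y p\<bar>)"
    have s2: "(\<Sum>p\<in>Q. \<bar>g x p - g y p\<bar>) \<le> 2 * V / \<Phi> x"
    proof -
      have pos: "sum (h x) Q > 0" using hx \<Phi>1[of x] by simp
      have "(\<Sum>p\<in>Q. \<bar>h x p / sum (h x) Q - h y p / sum (h y) Q\<bar>) \<le> 2 * (\<Sum>p\<in>Q. \<bar>h x p - h y p\<bar>) / sum (h x) Q"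
        by (rule normalize_l1[OF Qfin]) (use h0 pos in auto)
      then show ?thesis unfolding g_def V_def hx hy .
    qed
    have s3: "2 * V / \<Phi> x \<le> 2 * V"
    proof -
      have "V \<ge> 0" unfolding V_def by (rule sum_nonneg) simp
      then show ?thesis using \<Phi>1[of x] by (simp add: divide_le_eq mult_le_cancel_left1)
    qed
    have s4: "V \<le> (\<Sum>i\<le>n. R / Ls i + \<delta>)"
    proof -
      have "V \<le> (\<Sum>p\<in>Q. \<Sum>i\<le>n. \<bar>t i x p - t i y p\<bar>)"
        unfolding V_def h_def by (rule sum_mono) (simp add: sum_subtractf[symmetric] sum_abs)
      also have "\<dots> = (\<Sum>i\<le>n. \<Sum>p\<in>Q. \<bar>t i x p - t i y p\<bar>)" by (rule sum.swap)
      also have "\<dots> \<le> (\<Sum>i\<le>n. R / Ls i + \<delta>)"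
        by (rule sum_mono) (use var_i[OF dxy] in \<open>simp add: Q_def\<close>)
      finally show ?thesis .
    qed
    have s5: "(\<Sum>i\<le>n. R / Ls i + \<delta>) \<le> 3 * e / 8"
    proof -
      have "(\<Sum>i\<le>n. R / Ls i + \<delta>) = e / 8 * (\<Sum>i\<le>n. 1 / 2^i) + (real n + 1) * \<delta>"
        by (simp add: sum.distrib RLi sum_distrib_left)
      also have "(real n + 1) * \<delta> = e / 8"
      proof -
        have "real n + 1 > 0" by simp
        then show ?thesis unfolding \<delta>_def by (simp add: field_simps)
      qed
      finally have eq: "(\<Sum>i\<le>n. R / Ls i + \<delta>) = e / 8 * (\<Sum>i\<le>n. 1 / 2^i) + e / 8" .
      have "e / 8 * (\<Sum>i\<le>n. (1::real) / 2^i) \<le> e / 8 * 2" using geom_sum_le[of n] e by (intro mult_left_mono) auto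
      then show ?thesis unfolding eq by simp
    qed
    show ?thesis unfolding s1 using s2 s3 s4 s5 e by linarith
  qed
  show "\<exists>S>0. \<exists>M::nat. \<exists>g::'a \<Rightarrow> 'a \<Rightarrow> real.
     (\<forall>x. (\<forall>p. g x p \<ge> 0) \<and> finite (fsupp (g x)) \<and> card (fsupp (g x)) \<le> M \<and>
          fsupp (g x) \<subseteq> ball x S \<and> sum (g x) (fsupp (g x)) = 1) \<and>
     (\<forall>x y. dist x y < R \<longrightarrow> (\<Sum>p\<in>fsupp (g x) \<union> fsupp (g y). \<bar>g x p - g y p\<bar>) \<le> \<epsilon>)"
  proof -
    have part1: "\<forall>x. (\<forall>p. g x p \<ge> 0) \<and> finite (fsupp (g x)) \<and> card (fsupp (g x)) \<le> (n+1)*M \<and>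
          fsupp (g x) \<subseteq> ball x S \<and> sum (g x) (fsupp (g x)) = 1"
    proof
      fix x :: 'a
      have a1: "\<forall>p. g x p \<ge> 0" using g0 by blast
      have a2: "finite (fsupp (g x))" using gsupp[of x] PPfin[of x] finite_subset by blast
      have a3: "card (fsupp (g x)) \<le> (n+1)*M" using card_mono[OF PPfin gsupp, of x] PPcard[of x] by linarith
      have a4: "fsupp (g x) \<subseteq> ball x S" using gsupp[of x] PPball[of x] by blast
      show "(\<forall>p. g x p \<ge> 0) \<and> finite (fsupp (g x)) \<and> card (fsupp (g x)) \<le> (n+1)*M \<and>
          fsupp (g x) \<subseteq> ball x S \<and> sum (g x) (fsupp (g x)) = 1"
        using a1 a2 a3 a4 gsum1[of x] by blast
    qed
    have part2: "\<forall>x y. dist x y < R \<longrightarrow> (\<Sum>p\<in>fsupp (g x) \<union> fsupp (g y). \<bar>g x p - g y p\<bar>) \<le> \<epsilon>"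
      using var by blast
    show ?thesis
      by (rule exI[of _ S], rule conjI[OF Spos], rule exI[of _ "(n+1)*M"], rule exI[of _ g], rule conjI[OF part1 part2])
  qed
qed


theorem corollary4p6:
  assumes "weak_hyperbolic_C TYPE('a::metric_space)"
  shows "property_A TYPE('a)"
  by (rule realA_imp_A[OF whC_realA[OF assms]])

end
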